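(* For all integers $n,f,k$ with $1\le f\le n-1$ and $1\le k\le n$, the task $(k+1)\text{-TAg}(n+1,f)$ is $C^*$-reducible to $k\text{-TAg}(n,f)$. Specifically, with $\Pi=\{1,\dots,n+1\}$ and $\Pi_i=\Pi\setminus\{i\}$, the following algorithm solves $(k+1)\text{-TAg}(\Pi,f)$ using the oracles $\mathcal O.k\text{-TAg}(\Pi_l,f)$, $l=1,\dots,n+1$: each process $i$, for $l=1,\dots,n+1$ with $l\ne i$ in this order, queries $\mathcal O.k\text{-TAg}(\Pi_l,f)$ with its initial value $v_i$, receives answer $w_l$ and sends $(l,w_l)$ to all; it then waits until it knows $w_l$ for all $l\in\{1,\dots,n+1\}$ and decides $\max_l w_l$.
   Context: Model: a finite set of processes runs an asynchronous algorithm communicating by reliable message passing with unbounded delays and speeds; processes fail only by crashing. Time is $\mathcal T=\mathbb N$; a failure pattern $F$ for $\Pi$ is a nondecreasing map $\mathcal T\to2^\Pi$, $Faulty(F)=\bigcup_tF(t)$. A binary agreement problem $P$ for $\Pi$ maps each $(F,\vec V)$, $\vec V\in\{0,1\}^\Pi$, to a nonempty $P(F,\vec V)\subseteq\{0,1\}$; a task is $T=(P,f)$. An algorithm solves $T$ if in every run with $|Faulty(F)|\le f$ and initial values $\vec V$: every correct process eventually decides, decisions are irrevocable, no two processes decide differently, and decisions lie in $P(F,\vec V)$. $k\text{-TAg}_\Pi(F,\vec V)=\{0\}$ if at least $k$ entries of $\vec V$ are $0$; $=\{1\}$ if $\vec V$ is all-ones and $|Faulty(F)|\le k-1$; $=\{0,1\}$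 otherwise; $k\text{-TAg}(\Pi,f)=(k\text{-TAg}_\Pi,f)$; $k\text{-TAg}(n,f)=k\text{-TAg}(\{1,\dots,n\},f)$. Oracles: for $T=(P,f)$ on process set $\Pi'$, $\mathcal O.T$ is a black box with consultants $\Pi'$; its history is a sequence of successive consultations, in each of which every consultant may submit at most one query in $\{0,1\}$ and the oracle returns a common response $d$ with $d\in P(F,\vec V)$ for every $\vec V$ extending the partial query vector (the oracle may use the whole failure pattern restricted to $\Pi'$, including future crashes), and every correct querier gets the response whenever at least $|\Pi'|-f$ consultants query; $\mathcal O.T$ is the most general such oracle. $C^*$-reduction: $T_1\le_{C^*}T_2$ if there is an algorithm solving $T_1$ whose processes may additionally consult any finite collection of oracles $\mathcal O.T_2^{(j)}$, each $T_2^{(j)}$ being a copy of $T_2$ whose processes are renamed into (a subset of) the processes of $T_1$. *)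

theory Defs
  imports Main
begin

(* Binary values: False encodes 0, True encodes 1 (so max on bool is max on {0,1}). *)

definition procs :: "nat \<Rightarrow> nat set" where
  "procs N = {1..N}"

definition failure_pattern :: "nat set \<Rightarrow> (nat \<Rightarrow> nat set) \<Rightarrow> bool" where
  "failure_pattern P F \<longleftrightarrow> (\<forall>t t'. t \<le> t' \<longrightarrow> F t \<subseteq> F t') \<and> (\<forall>t. F t \<subseteq> P)"

definition Faulty :: "(nat \<Rightarrow> nat set) \<Rightarrow> nat set" where
  "Faulty F = (\<Union>t. F t)"

definition TAg :: "nat \<Rightarrow> nat set \<Rightarrow> (nat \<Rightarrow> nat set) \<Rightarrow> (nat \<Rightarrow> bool) \<Rightarrow> bool set" where
  "TAg k P F V =
     (if k \<le> card {i \<in> P. V i = False} then {False}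
      else if (\<forall>i\<in>P. V i = True) \<and> card (Faulty F) \<le> k - 1 then {True}
      else UNIV)"

record cfg =
  pc       :: "nat \<Rightarrow> nat"                 (* number of oracle answers already processed by process i *)
  waiting  :: "nat \<Rightarrow> bool"                (* process i has a pending oracle query *)
  know     :: "nat \<Rightarrow> nat \<Rightarrow> bool option"   (* know i l = known value w_l at process i *)
  dec      :: "nat \<Rightarrow> bool option"
  queried  :: "nat \<Rightarrow> nat \<Rightarrow> bool option"   (* queried l i = query submitted by i to oracle l *)
  oans     :: "nat \<Rightarrow> nat \<Rightarrow> bool option"   (* oans l i = response of oracle l delivered to i *)
  transit  :: "(nat \<times> nat \<times> nat \<times> bool) set"  (* messages (sender, receiver, l, w_l) in transit *)

definition init_cfg :: cfg where
  "init_cfg = \<lparr> pc = (\<lambda>_. 0), waiting = (\<lambda>_. False), know = (\<lambda>_ _. None), dec = (\<lambda>_. None),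
               queried = (\<lambda>_ _. None), oans = (\<lambda>_ _. None), transit = {} \<rparr>"

datatype event =
    PStep nat
  | Deliver "nat \<times> nat \<times> nat \<times> bool"
  | OAns nat nat                         (* oracle l returns its response to querier i *)

definition qorder :: "nat \<Rightarrow> nat \<Rightarrow> nat list" where
  "qorder N i = filter (\<lambda>l. l \<noteq> i) [1..<N+1]"

(* One transition. N = number of processes, V = initial values, d l = common response of oracle l. *)
definition step :: "nat \<Rightarrow> (nat \<Rightarrow> bool) \<Rightarrow> (nat \<Rightarrow> bool) \<Rightarrow> event \<Rightarrow> cfg \<Rightarrow> cfg" where
  "step N V d e c = (case e of
     PStep i \<Rightarrow>
       (if dec c i \<noteq> None then c
        else if \<not> waiting c i then
          (if pc c i < N - 1 then
             (let l = qorder N i ! pc c i in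
              c\<lparr> queried := (queried c)(l := (queried c l)(i := Some (V i))),
                 waiting := (waiting c)(i := True) \<rparr>)
           else if (\<forall>l\<in>procs N. know c i l \<noteq> None) then
             c\<lparr> dec := (dec c)(i := Some (Max ((\<lambda>l. the (know c i l)) ` procs N))) \<rparr>
           else c)
        else
          (let l = qorder N i ! pc c i in
           (case oans c l i of
              None \<Rightarrow> c
            | Some w \<Rightarrow>
                c\<lparr> know := (know c)(i := (know c i)(l := Some w)),
                   transit := transit c \<union> {(i, j, l, w) | j. j \<in> procs N},
                   waiting := (waiting c)(i := False),
                   pc := (pc c)(i := Suc (pc c i)) \<rparr>)))
   | Deliver m \<Rightarrow>
       (case m of (s, r, l, w) \<Rightarrow>
          if m \<in> transit c then
            c\<lparr> transit := transit c - {m},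
               know := (know c)(r := (know c r)(l :=
                         (case know c r l of None \<Rightarrow> Some w | Some u \<Rightarrow> Some u))) \<rparr>
          else c)
   | OAns l i \<Rightarrow>
       (if queried c l i \<noteq> None \<and> oans c l i = None
        then c\<lparr> oans := (oans c)(l := (oans c l)(i := Some (d l))) \<rparr>
        else c))"

definition admissible_run ::
  "nat \<Rightarrow> nat \<Rightarrow> nat \<Rightarrow> (nat \<Rightarrow> nat set) \<Rightarrow> (nat \<Rightarrow> bool) \<Rightarrow> (nat \<Rightarrow> bool)
   \<Rightarrow> (nat \<Rightarrow> cfg) \<Rightarrow> (nat \<Rightarrow> event) \<Rightarrow> bool" where
  "admissible_run N k f F V d C ev \<longleftrightarrow>
     failure_pattern (procs N) F
   \<and> C 0 = init_cfg
   \<and> (\<forall>t. C (Suc t) = step N V d (ev t) (C t))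
   \<comment> \<open>only alive processes of the system take steps\<close>
   \<and> (\<forall>t i. ev t = PStep i \<longrightarrow> i \<in> procs N \<and> i \<notin> F t)
   \<comment> \<open>correct processes take infinitely many steps\<close>
   \<and> (\<forall>i \<in> procs N - Faulty F. \<forall>t. \<exists>t'\<ge>t. ev t' = PStep i)
   \<comment> \<open>reliable channels: messages to correct processes are eventually delivered\<close>
   \<and> (\<forall>t s r l w. (s, r, l, w) \<in> transit (C t) \<and> r \<in> procs N - Faulty F
          \<longrightarrow> (\<exists>t'\<ge>t. ev t' = Deliver (s, r, l, w)))
   \<comment> \<open>oracle safety: the common response of oracle l is valid for every input vector
       extending its (partial) query vector, w.r.t. F restricted to Pi_l\<close>
   \<and> (\<forall>l \<in> procs N. \<forall>V'.
          (\<forall>i \<in> procs N - {l}. \<forall>v. (\<exists>t. queried (C t) l i = Some v) \<longrightarrow> V' i = v)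
          \<longrightarrow> d l \<in> TAg k (procs N - {l}) (\<lambda>t. F t \<inter> (procs N - {l})) V')
   \<comment> \<open>oracle liveness: if at least |Pi_l| - f consultants query, every correct querier gets the response\<close>
   \<and> (\<forall>l \<in> procs N.
          card {i \<in> procs N - {l}. \<exists>t. queried (C t) l i \<noteq> None} \<ge> card (procs N - {l}) - f
          \<longrightarrow> (\<forall>i \<in> procs N - {l} - Faulty F. (\<exists>t. queried (C t) l i \<noteq> None)
                  \<longrightarrow> (\<exists>t. oans (C t) l i \<noteq> None)))"

end

theory Submission
  imports Defs
begin


definition inv1 :: "nat \<Rightarrow> (nat \<Rightarrow> bool) \<Rightarrow> (nat \<Rightarrow> bool) \<Rightarrow> cfg \<Rightarrow> bool" where
 "inv1 N V d c \<longleftrightarrow>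
   (\<forall>i. pc c i \<le> N - 1)
 \<and> (\<forall>i. waiting c i \<longrightarrow> pc c i < N - 1 \<and> queried c (qorder N i ! pc c i) i \<noteq> None)
 \<and> (\<forall>i. dec c i \<noteq> None \<longrightarrow> pc c i = N - 1 \<and> \<not> waiting c i)
 \<and> (\<forall>l i. queried c l i \<noteq> Some (\<not> V i))
 \<and> (\<forall>l i. oans c l i \<noteq> Some (\<not> d l))
 \<and> (\<forall>s r l. (s,r,l,\<not> d l) \<notin> transit c)
 \<and> (\<forall>i l. know c i l \<noteq> Some (\<not> d l))
 \<and> (\<forall>i. dec c i \<noteq> Some (\<not> Max (d ` procs N)))
 \<and> (\<forall>i j. j < pc c i \<longrightarrow> know c i (qorder N i ! j) \<noteq> None \<and> queried c (qorder N i ! j) i \<noteq> None)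
 \<and> (\<forall>j idx r. idx < pc c j \<longrightarrow> r \<in> procs N \<longrightarrow>
        (j, r, qorder N j ! idx, d (qorder N j ! idx)) \<in> transit c \<or> know c r (qorder N j ! idx) \<noteq> None)"

lemma neg_some: "x \<noteq> Some (\<not> b) \<Longrightarrow> x = Some w \<Longrightarrow> w = b" by auto
lemma neg_some2: "x \<noteq> Some (\<not> b) \<Longrightarrow> x \<noteq> None \<Longrightarrow> the x = b" by auto

lemma neg_mem: "(s,r,l,\<not> b) \<notin> T \<Longrightarrow> (s,r,l,w) \<in> T \<Longrightarrow> w = b" by (cases w; cases b) auto

lemma inv1_init: "inv1 N V d init_cfg"
  by (simp add: inv1_def init_cfg_def)

lemma inv1_step: assumes "inv1 N V d c" shows "inv1 N V d (step N V d e c)"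
proof (cases e)
  case (PStep i)
  show ?thesis
  proof (cases "dec c i = None")
    case False then show ?thesis using assms PStep by (simp add: step_def)
  next
    case dN: True
    show ?thesis
    proof (cases "waiting c i")
      case False
      show ?thesis
      proof (cases "pc c i < N - 1")
        case True
        then show ?thesis using assms PStep dN False
          unfolding inv1_def by (auto simp add: step_def Let_def) metis+
      next
        case pcF: False
        show ?thesis
        proof (cases "\<forall>l\<in>procs N. know c i l \<noteq> None")
          case True
          have "Max ((\<lambda>l. the (know c i l)) ` procs N) = Max (d ` procs N)"
          proof -
            have "(\<lambda>l. the (know c i l)) ` procs N = d ` procs N"
              apply (rule image_cong[OF refl])
              using True assms neg_some2 unfolding inv1_def by metis
            then show ?thesis by simp
          qed
          moreover define M where "M = Max (d ` procs N)"
          ultimately have ceq: "step N V d e c = c\<lparr>dec := (dec c)(i := Some M)\<rparr>"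
            using PStep dN False pcF True by (simp add: step_def)
          have pcN: "pc c i = N - 1" using assms pcF unfolding inv1_def by (metis le_neq_implies_less)
          show ?thesis unfolding ceq using assms pcN False unfolding inv1_def M_def[symmetric]
            by auto
        next
          case F2: False
          then show ?thesis using assms PStep dN False pcF by (auto simp add: step_def)
        qed
      qed
    next
      case W: True
      show ?thesis
      proof (cases "oans c (qorder N i ! pc c i) i")
        case None
        then show ?thesis using assms PStep dN W by (simp add: step_def)
      next
        case (Some w)
        define p where "p = pc c i"
        define l where "l = qorder N i ! p"
        have wd: "w = d l" using assms Some neg_some unfolding inv1_def l_def p_def by metis
        have ceq: "step N V d e c = c\<lparr> know := (know c)(i := (know c i)(l := Some (d l))),
                   transit := transit c \<union> {(i, j, l, d l) | j. j \<in> procs N},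
                   waiting := (waiting c)(i := False),
                   pc := (pc c)(i := Suc p) \<rparr>"
          using PStep dN W Some wd by (simp add: step_def Let_def l_def p_def)
        have I: "inv1 N V d c" by fact
        note I' = I[unfolded inv1_def]
        have pl: "p < N - 1" and ql: "queried c l i \<noteq> None" using I' W unfolding p_def l_def by auto
        have K: "\<forall>j. j < Suc p \<longrightarrow> queried c (qorder N i ! j) i \<noteq> None"
          using I' ql unfolding l_def p_def by (auto simp: less_Suc_eq)
        have K2: "\<forall>j. j < p \<longrightarrow> know c i (qorder N i ! j) \<noteq> None"
          using I' unfolding l_def p_def by auto
        have K3: "\<forall>j. j < Suc p \<longrightarrow> qorder N i ! j \<noteq> l \<longrightarrow> know c i (qorder N i ! j) \<noteq> None"
        proof (intro allI impI)
          fix j assume a: "j < Suc p" "qorder N i ! j \<noteq> l"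
          then have "j < p" unfolding l_def by (cases "j = p") auto
          then show "know c i (qorder N i ! j) \<noteq> None" using K2 by auto
        qed
        show ?thesis unfolding ceq inv1_def
          apply (intro conjI allI impI)
          subgoal using pl I' dN by auto
          subgoal using pl I' dN by auto
          subgoal using pl I' dN by auto
          subgoal using pl I' dN by auto
          subgoal using pl I' dN by auto
          subgoal using pl I' dN by auto
          subgoal using pl I' dN by auto
          subgoal using pl I' dN by auto
          subgoal using pl I' dN by auto
          subgoal using pl I' dN by auto
          subgoal using K3 I' by (auto split: if_splits)
          subgoal using K I' by (auto split: if_splits)
          subgoal premises prems for jj idx r
          proof (cases "jj = i \<and> idx = p")
            case True then show ?thesis using prems l_def by auto
          next
            case False
            then have "idx < pc c jj" using prems p_def by (auto split: if_splits)
            then have "(jj, r, qorder N jj ! idx, d (qorder N jj ! idx)) \<in> transit c \<or> know c r (qorder N jj ! idx) \<noteq> None"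
              using I' prems by blast
            then show ?thesis by auto
          qed
          done
      qed
    qed
  qed
next
  case (Deliver m)
  obtain s r l w where m: "m = (s, r, l, w)" by (cases m) auto
  note I' = assms[unfolded inv1_def]
  show ?thesis
  proof (cases "m \<in> transit c")
    case False then show ?thesis using assms Deliver m by (simp add: step_def)
  next
    case True
    have nm: "(s,r,l,\<not> d l) \<notin> transit c" using I' by blast
    have wd: "w = d l" using neg_mem[OF nm] True m by simp
    have kn: "(case know c r l of None \<Rightarrow> Some (d l) | Some u \<Rightarrow> Some u) = Some (d l)"
    proof (cases "know c r l")
      case None then show ?thesis using wd by simp
    next
      case (Some u)
      have "know c r l \<noteq> Some (\<not> d l)" using I' by blast
      then have "u = d l" using neg_some Some by metis
      then show ?thesis using Some by simp
    qed
    have ceq: "step N V d e c = c\<lparr>transit := transit c - {(s, r, l, d l)},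
        know := (know c)(r := (know c r)(l := Some (d l)))\<rparr>"
      using True unfolding Deliver m by (simp only: step_def event.case prod.case if_True kn wd)
    show ?thesis unfolding ceq inv1_def
      apply (intro conjI allI impI)
      subgoal using I' by auto
      subgoal using I' by auto
      subgoal using I' by auto
      subgoal using I' by auto
      subgoal using I' by auto
      subgoal using I' by auto
      subgoal using I' by auto
      subgoal using I' by auto
      subgoal using I' by auto
      subgoal using I' by auto
      subgoal using I' by auto
      subgoal using I' by auto
      subgoal premises prems for jj idx r'
      proof -
        have "(jj, r', qorder N jj ! idx, d (qorder N jj ! idx)) \<in> transit c \<or> know c r' (qorder N jj ! idx) \<noteq> None"
          using I' prems by simp
        then show ?thesis by auto
      qed
      done
  qed
next
  case (OAns l i)
  then show ?thesis using assms unfolding inv1_def by (auto simp add: step_def)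
qed



definition mu :: "cfg \<Rightarrow> nat \<Rightarrow> nat" where
  "mu c i = 2 * pc c i + (if waiting c i then 1 else 0)"

lemma mu_mono: "mu c i \<le> mu (step N V d e c) i"
  by (auto simp: mu_def step_def Let_def split: event.split option.split if_splits)

lemma pc_mono: "pc c i \<le> pc (step N V d e c) i"
  by (auto simp: step_def Let_def split: event.split option.split if_splits)

lemma know_mono: "know c i l \<noteq> None \<Longrightarrow> know (step N V d e c) i l \<noteq> None"
  by (auto simp: step_def Let_def split: event.split option.split if_splits)

lemma oans_mono: "oans c l i \<noteq> None \<Longrightarrow> oans (step N V d e c) l i \<noteq> None"
  by (auto simp: step_def Let_def split: event.split option.split if_splits)

lemma queried_mono: "queried c l i \<noteq> None \<Longrightarrow> queried (step N V d e c) l i \<noteq> None"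
  by (auto simp: step_def Let_def split: event.split option.split if_splits)

lemma dec_mono: "dec c i = Some v \<Longrightarrow> dec (step N V d e c) i = Some v"
  by (auto simp: step_def Let_def split: event.split option.split if_splits)

lemma pstep_query: "dec c i = None \<Longrightarrow> \<not> waiting c i \<Longrightarrow> pc c i < N - 1 \<Longrightarrow>
   queried (step N V d (PStep i) c) (qorder N i ! pc c i) i \<noteq> None"
  by (simp add: step_def Let_def)

lemma pstep_mu1: "dec c i = None \<Longrightarrow> \<not> waiting c i \<Longrightarrow> pc c i < N - 1 \<Longrightarrow>
   mu c i < mu (step N V d (PStep i) c) i"
  by (simp add: step_def Let_def mu_def)

lemma pstep_mu2: "dec c i = None \<Longrightarrow> waiting c i \<Longrightarrow> oans c (qorder N i ! pc c i) i \<noteq> None \<Longrightarrow>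
   mu c i < mu (step N V d (PStep i) c) i"
  by (auto simp add: step_def Let_def mu_def)

lemma pstep_dec: "dec c i = None \<Longrightarrow> \<not> waiting c i \<Longrightarrow> \<not> pc c i < N - 1 \<Longrightarrow>
   \<forall>l\<in>procs N. know c i l \<noteq> None \<Longrightarrow> dec (step N V d (PStep i) c) i \<noteq> None"
  by (simp add: step_def Let_def)

lemma deliver_know: "(s, r, l, w) \<in> transit c \<Longrightarrow> know (step N V d (Deliver (s, r, l, w)) c) r l \<noteq> None"
  by (simp add: step_def split: option.split)

definition cnt :: "nat \<Rightarrow> nat \<Rightarrow> nat" where
  "cnt i l = length (filter (\<lambda>l'. l' \<noteq> i) [1..<l+1])"

lemma cnt0: "cnt i 0 = 0" by (simp add: cnt_def)

lemma cnt_Suc: "cnt i (Suc l) = (if i = Suc l then cnt i l else Suc (cnt i l))"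
  by (simp add: cnt_def)

lemma cnt_N: "cnt i N = length (qorder N i)"
  by (simp add: cnt_def qorder_def)

lemma qorder_len: "i \<in> procs N \<Longrightarrow> length (qorder N i) = N - 1"
proof -
  assume i: "i \<in> procs N"
  have "length (qorder N i) = card (set (qorder N i))"
    by (simp add: qorder_def distinct_card[symmetric])
  also have "set (qorder N i) = procs N - {i}" by (auto simp: qorder_def procs_def)
  also have "card \<dots> = N - 1" using i by (simp add: procs_def)
  finally show ?thesis .
qed

lemma qorder_set: "set (qorder N i) = procs N - {i}" by (auto simp: qorder_def procs_def)

lemma qorder_pos: assumes "i \<noteq> Suc l" "Suc l \<le> N"
  shows "cnt i l < length (qorder N i) \<and> qorder N i ! cnt i l = Suc l"
proof -
  have "[1..<N+1] = [1..<l+1] @ [Suc l] @ [Suc l + 1..<N+1]"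
  proof -
    have "[1..<N+1] = [1..<Suc l + 1] @ [Suc l + 1..<N+1]"
      using assms upt_add_eq_append[of 1 "Suc l + 1" "N - Suc l"] by simp
    moreover have "[1..<Suc l + 1] = [1..<l+1] @ [Suc l]" by simp
    ultimately show ?thesis by simp
  qed
  then have "qorder N i = filter (\<lambda>l'. l' \<noteq> i) [1..<l+1] @ [Suc l] @ filter (\<lambda>l'. l' \<noteq> i) [Suc l + 1..<N+1]"
    using assms by (simp add: qorder_def)
  then show ?thesis by (simp add: cnt_def nth_append)
qed



locale R =
  fixes N k f :: nat and F :: "nat \<Rightarrow> nat set" and V d :: "nat \<Rightarrow> bool" and C :: "nat \<Rightarrow> cfg" and ev :: "nat \<Rightarrow> event"
  assumes adm: "admissible_run N k f F V d C ev"
begin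

lemmas A = adm[unfolded admissible_run_def]
lemma fp: "failure_pattern (procs N) F" using adm by (simp add: admissible_run_def)
lemma C0: "C 0 = init_cfg" using adm by (simp add: admissible_run_def)
lemma CS: "C (Suc t) = step N V d (ev t) (C t)" using adm by (simp add: admissible_run_def)
lemma fair: "i \<in> procs N - Faulty F \<Longrightarrow> \<exists>t'\<ge>t. ev t' = PStep i" using adm by (simp add: admissible_run_def)
lemma deliv: "(s, r, l, w) \<in> transit (C t) \<Longrightarrow> r \<in> procs N - Faulty F \<Longrightarrow> \<exists>t'\<ge>t. ev t' = Deliver (s, r, l, w)"
  using A[THEN conjunct2, THEN conjunct2, THEN conjunct2, THEN conjunct2, THEN conjunct2, THEN conjunct1] by blast
lemma osafe: "l \<in> procs N \<Longrightarrow> (\<forall>i \<in> procs N - {l}. \<forall>v. (\<exists>t. queried (C t) l i = Some v) \<longrightarrow> V' i = v)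
          \<Longrightarrow> d l \<in> TAg k (procs N - {l}) (\<lambda>t. F t \<inter> (procs N - {l})) V'"
  using A[THEN conjunct2, THEN conjunct2, THEN conjunct2, THEN conjunct2, THEN conjunct2, THEN conjunct2, THEN conjunct1] by blast
lemma olive: "l \<in> procs N \<Longrightarrow>
          card {i \<in> procs N - {l}. \<exists>t. queried (C t) l i \<noteq> None} \<ge> card (procs N - {l}) - f
          \<Longrightarrow> i \<in> procs N - {l} - Faulty F \<Longrightarrow> (\<exists>t. queried (C t) l i \<noteq> None)
                  \<Longrightarrow> (\<exists>t. oans (C t) l i \<noteq> None)"
  using A[THEN conjunct2, THEN conjunct2, THEN conjunct2, THEN conjunct2, THEN conjunct2, THEN conjunct2, THEN conjunct2] by blast

lemma Faulty_sub: "Faulty F \<subseteq> procs N" using fp by (auto simp: failure_pattern_def Faulty_def)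
lemma fin_Faulty: "finite (Faulty F)" using Faulty_sub finite_subset by (auto simp: procs_def)

lemma inv: "inv1 N V d (C t)"
  by (induction t) (auto simp: C0 CS inv1_init inv1_step)


lemma lift: assumes "\<And>t. P (C t) \<Longrightarrow> P (C (Suc t))" "P (C t)" "t \<le> t'" shows "P (C t')"
  using assms(3,2) by (induction t' rule: dec_induct) (auto intro: assms(1))

lemma pc_le: "t \<le> t' \<Longrightarrow> pc (C t) i \<le> pc (C t') i"
  by (rule lift[where P="\<lambda>c. pc (C t) i \<le> pc c i"]) (auto simp: CS intro: le_trans[OF _ pc_mono])
lemma mu_le: "t \<le> t' \<Longrightarrow> mu (C t) i \<le> mu (C t') i"
  by (rule lift[where P="\<lambda>c. mu (C t) i \<le> mu c i"]) (auto simp: CS intro: le_trans[OF _ mu_mono])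
lemma know_le: "t \<le> t' \<Longrightarrow> know (C t) i l \<noteq> None \<Longrightarrow> know (C t') i l \<noteq> None"
  by (rule lift[where P="\<lambda>c. know c i l \<noteq> None"]) (simp only: CS, erule know_mono)+
lemma oans_le: "t \<le> t' \<Longrightarrow> oans (C t) l i \<noteq> None \<Longrightarrow> oans (C t') l i \<noteq> None"
  by (rule lift[where P="\<lambda>c. oans c l i \<noteq> None"]) (simp only: CS, erule oans_mono)+
lemma dec_le: "t \<le> t' \<Longrightarrow> dec (C t) i = Some v \<Longrightarrow> dec (C t') i = Some v"
  by (rule lift[where P="\<lambda>c. dec c i = Some v"]) (simp only: CS, erule dec_mono)+

lemma inv_pc: "pc (C t) i \<le> N - 1" using inv[of t] unfolding inv1_def by blast
lemma inv_wait: "waiting (C t) i \<Longrightarrow> pc (C t) i < N - 1 \<and> queried (C t) (qorder N i ! pc (C t) i) i \<noteq> None"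
  using inv[of t] unfolding inv1_def by blast
lemma inv_dec: "dec (C t) i \<noteq> None \<Longrightarrow> pc (C t) i = N - 1 \<and> \<not> waiting (C t) i"
  using inv[of t] unfolding inv1_def by blast
lemma inv_q: "queried (C t) l i \<noteq> Some (\<not> V i)" using inv[of t] unfolding inv1_def by blast
lemma inv_decv: "dec (C t) i \<noteq> Some (\<not> Max (d ` procs N))" using inv[of t] unfolding inv1_def by blast
lemma inv_idx: "j < pc (C t) i \<Longrightarrow> know (C t) i (qorder N i ! j) \<noteq> None \<and> queried (C t) (qorder N i ! j) i \<noteq> None"
  using inv[of t] unfolding inv1_def by blast
lemma inv_tr: "idx < pc (C t) j \<Longrightarrow> r \<in> procs N \<Longrightarrow>
   (j, r, qorder N j ! idx, d (qorder N j ! idx)) \<in> transit (C t) \<or> know (C t) r (qorder N j ! idx) \<noteq> None"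
  using inv[of t] unfolding inv1_def by blast

lemma mu_up: assumes i: "i \<in> procs N - Faulty F" and m: "m \<le> mu (C t) i"
  and cond: "\<And>t'. t \<le> t' \<Longrightarrow> mu (C t') i = m \<Longrightarrow> ev t' = PStep i \<Longrightarrow> mu (C t') i < mu (C (Suc t')) i"
  shows "\<exists>t'. Suc m \<le> mu (C t') i"
proof -
  obtain t1 where t1: "t1 \<ge> t" "ev t1 = PStep i" using fair[OF i] by blast
  have "m \<le> mu (C t1) i" using le_trans[OF m mu_le[OF t1(1)]] .
  then show ?thesis
  proof (cases "mu (C t1) i = m")
    case True
    then have "Suc m \<le> mu (C (Suc t1)) i" using cond[OF t1(1) True t1(2)] by simp
    then show ?thesis by blast
  next
    case False
    then show ?thesis using \<open>m \<le> mu (C t1) i\<close> by (intro exI[of _ t1]) simp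
  qed
qed

lemma query_at: assumes j: "j \<in> procs N - Faulty F" and p: "p < N - 1" and t0: "p \<le> pc (C t0) j"
  shows "\<exists>t. queried (C t) (qorder N j ! p) j \<noteq> None"
proof -
  obtain t1 where t1: "t1 \<ge> t0" "ev t1 = PStep j" using fair[OF j] by blast
  have pp: "p \<le> pc (C t1) j" using le_trans[OF t0 pc_le[OF t1(1)]] .
  show ?thesis
  proof (cases "p < pc (C t1) j")
    case True then show ?thesis using inv_idx by blast
  next
    case False
    then have eq: "pc (C t1) j = p" using pp by simp
    show ?thesis
    proof (cases "waiting (C t1) j")
      case True then show ?thesis using inv_wait eq by metis
    next
      case False
      have "dec (C t1) j = None" using inv_dec[of t1 j] eq p by (cases "dec (C t1) j") auto
      then have "queried (C (Suc t1)) (qorder N j ! p) j \<noteq> None"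
        using pstep_query[of "C t1" j N V d] False eq p t1(2) CS by simp
      then show ?thesis by blast
    qed
  qed
qed

lemma advance: assumes j: "j \<in> procs N - Faulty F" and p: "p < N - 1" and t0: "p \<le> pc (C t0) j"
  and t1: "oans (C t1) (qorder N j ! p) j \<noteq> None"
  shows "\<exists>t. Suc p \<le> pc (C t) j"
proof -
  define T where "T = max t0 t1"
  have "2 * p \<le> mu (C T) i" if "i = j" for i
    using le_trans[OF t0 pc_le[of t0 T j]] that unfolding T_def mu_def by simp
  then have "\<exists>t'. Suc (2 * p) \<le> mu (C t') j"
  proof (intro mu_up[OF j])
    fix t' assume a: "T \<le> t'" "mu (C t') j = 2 * p" "ev t' = PStep j"
    have nw: "\<not> waiting (C t') j"
    proof
      assume "waiting (C t') j"
      then have "Suc (2 * pc (C t') j) = 2 * p" using a(2) unfolding mu_def by simp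
      then show False by presburger
    qed
    then have pc': "pc (C t') j = p" using a(2) unfolding mu_def by simp
    have "dec (C t') j = None" using inv_dec[of t' j] pc' p by (cases "dec (C t') j") auto
    then show "mu (C t') j < mu (C (Suc t')) j" using pstep_mu1[of "C t'" j N V d] nw pc' p a(3) CS by simp
  qed simp
  then obtain t2 where t2: "Suc (2 * p) \<le> mu (C t2) j" by blast
  define T2 where "T2 = max t2 T"
  have "Suc (2 * p) \<le> mu (C T2) j" using mu_le[of t2 T2 j] t2 unfolding T2_def by simp
  then have "\<exists>t'. Suc (Suc (2 * p)) \<le> mu (C t') j"
  proof (rule mu_up[OF j])
    fix t' assume a: "T2 \<le> t'" "mu (C t') j = Suc (2 * p)" "ev t' = PStep j"
    have w: "waiting (C t') j"
    proof (rule ccontr)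
      assume "\<not> waiting (C t') j"
      then have "2 * pc (C t') j = Suc (2 * p)" using a(2) unfolding mu_def by simp
      then show False by presburger
    qed
    then have pc': "pc (C t') j = p" using a(2) unfolding mu_def by simp
    have "dec (C t') j = None" using inv_dec[of t' j] w by (cases "dec (C t') j") auto
    moreover have "oans (C t') (qorder N j ! p) j \<noteq> None"
      using oans_le[OF _ t1, of t'] a(1) unfolding T2_def T_def by simp
    ultimately show "mu (C t') j < mu (C (Suc t')) j" using pstep_mu2[of "C t'" j N V d] w pc' a(3) CS by simp
  qed
  then obtain t3 where "Suc (Suc (2 * p)) \<le> mu (C t3) j" by blast
  then have "Suc p \<le> pc (C t3) j" unfolding mu_def by (auto split: if_splits)
  then show ?thesis by blast
qed

end


locale R2 = R +
  assumes cardF: "card (Faulty F) \<le> f" and fN: "f + 2 \<le> N" and k1: "1 \<le> k"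
begin

lemma card_procs: "card (procs N) = N" by (simp add: procs_def)
lemma fin_procs: "finite (procs N)" by (simp add: procs_def)

lemma reach: "l \<le> N \<Longrightarrow> i \<in> procs N - Faulty F \<Longrightarrow> \<exists>t. cnt i l \<le> pc (C t) i"
proof (induction l arbitrary: i)
  case 0 then show ?case by (simp add: cnt0)
next
  case (Suc l)
  show ?case
  proof (cases "i = Suc l")
    case True then show ?thesis using Suc by (simp add: cnt_Suc)
  next
    case False
    define L where "L = Suc l"
    have Lp: "L \<in> procs N" using Suc.prems unfolding L_def procs_def by simp
    have qall: "\<exists>t. queried (C t) L j \<noteq> None" if j: "j \<in> procs N - {L} - Faulty F" for j
    proof -
      have jn: "j \<noteq> Suc l" using j L_def by simp
      have jc: "j \<in> procs N - Faulty F" using j by simp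
      have jlen: "length (qorder N j) = N - 1" using j qorder_len by simp
      obtain t0 where "cnt j l \<le> pc (C t0) j" using Suc.IH[OF _ jc] Suc.prems by auto
      then show ?thesis using query_at[OF jc, of "cnt j l" t0] qorder_pos[OF jn Suc.prems(1)] jlen
        unfolding L_def by auto
    qed
    have sub: "procs N - {L} - Faulty F \<subseteq> {j \<in> procs N - {L}. \<exists>t. queried (C t) L j \<noteq> None}"
      using qall by blast
    have "card (procs N - {L}) - f \<le> card (procs N - {L}) - card (Faulty F)" using cardF by simp
    also have "\<dots> \<le> card (procs N - {L} - Faulty F)" using diff_card_le_card_Diff[OF fin_Faulty] by simp
    also have "\<dots> \<le> card {j \<in> procs N - {L}. \<exists>t. queried (C t) L j \<noteq> None}"
      using card_mono[OF _ sub] fin_procs by simp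
    finally have cardc: "card (procs N - {L}) - f \<le> card {j \<in> procs N - {L}. \<exists>t. queried (C t) L j \<noteq> None}" .
    have ic: "i \<in> procs N - {L} - Faulty F" using Suc.prems False L_def by simp
    obtain to where to: "oans (C to) L i \<noteq> None" using olive[OF Lp cardc ic qall[OF ic]] by blast
    have ilen: "length (qorder N i) = N - 1" using Suc.prems qorder_len by simp
    obtain t0 where t0: "cnt i l \<le> pc (C t0) i" using Suc.IH[OF _ Suc.prems(2)] Suc.prems by auto
    have qp: "cnt i l < N - 1" "qorder N i ! cnt i l = L" using qorder_pos[OF False Suc.prems(1)] ilen L_def by auto
    obtain t where "Suc (cnt i l) \<le> pc (C t) i" using advance[OF Suc.prems(2) qp(1) t0, of to] to qp(2) by auto
    then show ?thesis using False by (auto simp: cnt_Suc)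
  qed
qed

lemma pc_full: "i \<in> procs N - Faulty F \<Longrightarrow> \<exists>t. pc (C t) i = N - 1"
proof -
  assume i: "i \<in> procs N - Faulty F"
  obtain t where "cnt i N \<le> pc (C t) i" using reach[OF order_refl i] by blast
  then have "N - 1 \<le> pc (C t) i" using cnt_N qorder_len i by simp
  then show ?thesis using inv_pc[of t i] by (intro exI[of _ t]) simp
qed

lemma know_all_but: assumes "pc (C t) i = N - 1" "l \<in> procs N - {i}" "i \<in> procs N"
  shows "know (C t) i l \<noteq> None"
proof -
  have "l \<in> set (qorder N i)" using assms qorder_set by simp
  then obtain idx where "idx < length (qorder N i)" "qorder N i ! idx = l" by (auto simp: in_set_conv_nth)
  then show ?thesis using inv_idx[of idx t i] assms qorder_len by auto
qed

lemma other_correct: assumes "i \<in> procs N" shows "\<exists>j. j \<in> procs N - Faulty F \<and> j \<noteq> i"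
proof -
  have "card (procs N) - card (Faulty F) \<le> card (procs N - Faulty F)"
    using diff_card_le_card_Diff[OF fin_Faulty] by simp
  then have "2 \<le> card (procs N - Faulty F)" using cardF fN card_procs by simp
  moreover have "card (procs N - Faulty F) - 1 \<le> card (procs N - Faulty F - {i})"
    by (metis card_Diff_singleton_if diff_le_self order_refl)
  ultimately have "1 \<le> card (procs N - Faulty F - {i})" by simp
  then have "procs N - Faulty F - {i} \<noteq> {}" by (metis card.empty not_one_le_zero)
  then show ?thesis by blast
qed

lemma know_self: assumes i: "i \<in> procs N - Faulty F" shows "\<exists>t. know (C t) i i \<noteq> None"
proof -
  obtain j where j: "j \<in> procs N - Faulty F" "j \<noteq> i" using other_correct i by blast
  obtain Tj where Tj: "pc (C Tj) j = N - 1" using pc_full[OF j(1)] by blast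
  have "i \<in> set (qorder N j)" using i j qorder_set by simp
  then obtain idx where idx: "idx < length (qorder N j)" "qorder N j ! idx = i" by (auto simp: in_set_conv_nth)
  have idx2: "idx < pc (C t) j" if "Tj \<le> t" for t
    using idx Tj qorder_len j pc_le[OF that, of j] by simp
  have ip: "i \<in> procs N" using i by simp
  show ?thesis
  proof (cases "know (C Tj) i i = None")
    case False then show ?thesis by blast
  next
    case True
    then have tr: "(j, i, i, d i) \<in> transit (C Tj)" using inv_tr[OF idx2[OF order_refl] ip] idx(2) by simp
    obtain t' where t': "t' \<ge> Tj" "ev t' = Deliver (j, i, i, d i)" using deliv[OF tr] i by blast
    show ?thesis
    proof (cases "know (C t') i i = None")
      case False then show ?thesis by blast
    next
      case True
      then have "(j, i, i, d i) \<in> transit (C t')" using inv_tr[OF idx2[OF t'(1)] ip] idx(2) by simp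
      then have "know (C (Suc t')) i i \<noteq> None" using deliver_know CS t'(2) by metis
      then show ?thesis by blast
    qed
  qed
qed

lemma term_live: assumes i: "i \<in> procs N - Faulty F" shows "\<exists>t v. dec (C t) i = Some v"
proof -
  obtain T1 where T1: "pc (C T1) i = N - 1" using pc_full[OF i] by blast
  obtain T2 where T2: "know (C T2) i i \<noteq> None" using know_self[OF i] by blast
  obtain t where t: "t \<ge> max T1 T2" "ev t = PStep i" using fair[OF i] by blast
  show ?thesis
  proof (cases "dec (C t) i = None")
    case False then show ?thesis by blast
  next
    case True
    have pcN: "pc (C t) i = N - 1" using pc_le[of T1 t i] t(1) T1 inv_pc[of t i] by simp
    have nw: "\<not> waiting (C t) i" using inv_wait[of t i] pcN by auto
    have kn: "\<forall>l\<in>procs N. know (C t) i l \<noteq> None"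
    proof
      fix l assume l: "l \<in> procs N"
      show "know (C t) i l \<noteq> None"
      proof (cases "l = i")
        case True then show ?thesis using know_le[OF _ T2, of t] t(1) by simp
      next
        case False
        then have "know (C T1) i l \<noteq> None" using know_all_but[OF T1] l i by simp
        then show ?thesis using know_le[of T1 t] t(1) by simp
      qed
    qed
    have "dec (C (Suc t)) i \<noteq> None" using pstep_dec[OF True nw, of N V d] pcN kn CS t(2) by simp
    then show ?thesis by blast
  qed
qed

lemma dval: "dec (C t) i = Some v \<Longrightarrow> v = Max (d ` procs N)"
  using inv_decv[of t i] by (cases v; cases "Max (d ` procs N)") auto

lemma dl: assumes l: "l \<in> procs N" shows "d l \<in> TAg k (procs N - {l}) (\<lambda>t. F t \<inter> (procs N - {l})) V"
proof (rule osafe[OF l])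
  show "\<forall>i \<in> procs N - {l}. \<forall>v. (\<exists>t. queried (C t) l i = Some v) \<longrightarrow> V i = v"
  proof (intro ballI allI impI)
    fix i v assume "\<exists>t. queried (C t) l i = Some v"
    then obtain t where "queried (C t) l i = Some v" by blast
    then show "V i = v" using inv_q[of t l i] by (cases v; cases "V i") auto
  qed
qed

lemma Faulty_restr: "Faulty (\<lambda>t. F t \<inter> P) = Faulty F \<inter> P" by (auto simp: Faulty_def)

lemma val: "Max (d ` procs N) \<in> TAg (k + 1) (procs N) F V"
proof -
  have ne: "procs N \<noteq> {}" using fN by (auto simp: procs_def)
  have fin: "finite (d ` procs N)" using fin_procs by simp
  show ?thesis
  proof (cases "k + 1 \<le> card {i \<in> procs N. V i = False}")
    case True
    have "d l = False" if l: "l \<in> procs N" for l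
    proof -
      have "{i \<in> procs N. V i = False} - {l} \<subseteq> {i \<in> procs N - {l}. V i = False}" by auto
      then have "card ({i \<in> procs N. V i = False} - {l}) \<le> card {i \<in> procs N - {l}. V i = False}"
        using fin_procs by (intro card_mono) auto
      moreover have "card ({i \<in> procs N. V i = False}) - 1 \<le> card ({i \<in> procs N. V i = False} - {l})"
        using diff_card_le_card_Diff[of "{l}" "{i \<in> procs N. V i = False}"] by simp
      ultimately have "k \<le> card {i \<in> procs N - {l}. V i = False}" using True by simp
      then show ?thesis using dl[OF l] by (simp add: TAg_def)
    qed
    then have "d ` procs N = {False}" using ne by auto
    then show ?thesis using True by (simp add: TAg_def)
  next
    case False
    show ?thesis
    proof (cases "(\<forall>i\<in>procs N. V i = True) \<and> card (Faulty F) \<le> k")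
      case True
      obtain l0 where l0: "l0 \<in> procs N" "Faulty F \<noteq> {} \<longrightarrow> l0 \<in> Faulty F"
        using ne Faulty_sub by blast
      have "card (Faulty F \<inter> (procs N - {l0})) \<le> k - 1"
      proof (cases "Faulty F = {}")
        case True then show ?thesis by simp
      next
        case False
        then have "l0 \<in> Faulty F" using l0 by simp
        then have "Faulty F \<inter> (procs N - {l0}) = Faulty F - {l0}" using Faulty_sub by auto
        then show ?thesis using \<open>l0 \<in> Faulty F\<close> fin_Faulty True by (simp add: diff_le_mono)
      qed
      then have b: "(\<forall>i\<in>procs N - {l0}. V i = True) \<and> card (Faulty (\<lambda>t. F t \<inter> (procs N - {l0}))) \<le> k - 1"
        using True by (simp add: Faulty_restr)
      have e: "{i \<in> procs N - {l0}. V i = False} = {}" using True by auto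
      have a: "\<not> k \<le> card {i \<in> procs N - {l0}. V i = False}" unfolding e using k1 by simp
      have "TAg k (procs N - {l0}) (\<lambda>t. F t \<inter> (procs N - {l0})) V = {True}"
        by (simp only: TAg_def if_not_P[OF a] if_P[OF b])
      then have "d l0 = True" using dl[OF l0(1)] by simp
      then have "True \<le> Max (d ` procs N)" using Max_ge[OF fin] l0(1) by (metis imageI)
      then have "Max (d ` procs N) = True" by simp
      then show ?thesis using True False by (simp add: TAg_def)
    next
      case F2: False
      then have b: "\<not> ((\<forall>i\<in>procs N. V i = True) \<and> card (Faulty F) \<le> k + 1 - 1)" by simp
      have "TAg (k + 1) (procs N) F V = UNIV"
        by (simp only: TAg_def if_not_P[OF False] if_not_P[OF b])
      then show ?thesis by simp
    qed
  qed
qed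

end

theorem mainTheorem7:
  fixes n f k :: nat
  assumes "1 \<le> f" and "f \<le> n - 1" and "1 \<le> k" and "k \<le> n"
  shows "\<forall>F V d C ev. admissible_run (n + 1) k f F V d C ev \<and> card (Faulty F) \<le> f \<longrightarrow>
           (\<forall>i \<in> procs (n + 1) - Faulty F. \<exists>t v. dec (C t) i = Some v)
         \<and> (\<forall>i t t' v. t \<le> t' \<and> dec (C t) i = Some v \<longrightarrow> dec (C t') i = Some v)
         \<and> (\<forall>i j t t' v w. dec (C t) i = Some v \<and> dec (C t') j = Some w \<longrightarrow> v = w)
         \<and> (\<forall>i t v. dec (C t) i = Some v \<longrightarrow> v \<in> TAg (k + 1) (procs (n + 1)) F V)"
proof (intro allI impI)
  fix F V d C ev
  assume a: "admissible_run (n + 1) k f F V d C ev \<and> card (Faulty F) \<le> f"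
  interpret R2 "n + 1" k f F V d C ev
    using a assms by unfold_locales auto
  show "(\<forall>i \<in> procs (n + 1) - Faulty F. \<exists>t v. dec (C t) i = Some v)
         \<and> (\<forall>i t t' v. t \<le> t' \<and> dec (C t) i = Some v \<longrightarrow> dec (C t') i = Some v)
         \<and> (\<forall>i j t t' v w. dec (C t) i = Some v \<and> dec (C t') j = Some w \<longrightarrow> v = w)
         \<and> (\<forall>i t v. dec (C t) i = Some v \<longrightarrow> v \<in> TAg (k + 1) (procs (n + 1)) F V)"
  proof (intro conjI)
    show "\<forall>i \<in> procs (n + 1) - Faulty F. \<exists>t v. dec (C t) i = Some v" using term_live by blast
    show "\<forall>i t t' v. t \<le> t' \<and> dec (C t) i = Some v \<longrightarrow> dec (C t') i = Some v" using dec_le by blast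
    show "\<forall>i j t t' v w. dec (C t) i = Some v \<and> dec (C t') j = Some w \<longrightarrow> v = w"
      using dval by (metis)
    show "\<forall>i t v. dec (C t) i = Some v \<longrightarrow> v \<in> TAg (k + 1) (procs (n + 1)) F V"
    proof (intro allI impI)
      fix i t v assume "dec (C t) i = Some v"
      then have "v = Max (d ` procs (n + 1))" by (rule dval)
      then show "v \<in> TAg (k + 1) (procs (n + 1)) F V" using val by simp
    qed
  qed
qed

end
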